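(* Let $u\in L^\infty([0,+\infty);W^{1,p}(\mathbb{T}^d;\mathbb{R}^d))$, $p\in(1,\infty)$, be divergence-free. A function $\rho\in L^\infty(\mathbb{T}^d)$ satisfies $\rho\notin\mathcal{F}_u$ if and only if $\rho$ is measurable with respect to the $\sigma$-algebra $\mathcal{N}_u$. Equivalently, \[\mathcal{F}_u=\{\rho\in L^\infty(\mathbb{T}^d)\mid \rho\text{ is not }\mathcal{N}_u\text{-measurable}\}.\]
   Context: $\mathbb{T}^d$ ($d\ge2$) is the torus with Lebesgue measure $\mu$; $\mathcal{M}$ is the $\sigma$-algebra of Lebesgue measurable sets. $\Phi_t$ denotes the DiPerna–Lions measure-preserving flow map of $u$ (for a.e. $x$, $t\mapsto\Phi_t(x)$ solves $\dot\gamma=u(t,\gamma)$, $\gamma(0)=x$), and $\rho\circ\Phi_t^{-1}$ is the solution of $\partial_t\rho+u\cdot\nabla\rho=0$ with datum $\rho$. $\mathcal{F}_u:=\{\rho\in L^\infty(\mathbb{T}^d)\mid\{\rho\circ\Phi_t^{-1}\}_{t\ge0}\text{ is not precompact in }L^2(\mathbb{T}^d)\}$ (the data mixed by $u$), and $\mathcal{N}_u:=\{D\in\mathcal{M}\mid \mathbbm{1}_D\notin\mathcal{F}_u\}$, which is a $\sigma$-algebra. $\mathcal{N}_u$-measurability of $\rho$ means each level set $\{\rho\ge\alpha\}$ coincides up to a null set with an element of $\mathcal{N}_u$. *)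

theory Defs
  imports "HOL-Analysis.Analysis"
begin

section \<open>The torus T^d, modelled as the fundamental cube [0,1)^d\<close>

definition torus_cube :: "(real^'d::finite) set" where
  "torus_cube = {x. \<forall>i. 0 \<le> x$i \<and> x$i < 1}"

abbreviation torus_measure :: "(real^'d::finite) measure" ("\<mu>\<^sub>T") where
  "\<mu>\<^sub>T \<equiv> lebesgue_on torus_cube"

definition torus_proj :: "real^'d::finite \<Rightarrow> real^'d" where
  "torus_proj x = (\<chi> i. frac (x$i))"

definition periodic :: "(real^'d::finite \<Rightarrow> 'b) \<Rightarrow> bool" where
  "periodic f \<longleftrightarrow> (\<forall>x k. (\<forall>i. k$i \<in> \<int>) \<longrightarrow> f (x + k) = f x)"

definition partial_deriv :: "'d::finite \<Rightarrow> (real^'d \<Rightarrow> real) \<Rightarrow> real^'d \<Rightarrow> real" where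
  "partial_deriv i \<phi> x = frechet_derivative \<phi> (at x) (axis i 1)"

fun iter_partial :: "'d::finite list \<Rightarrow> (real^'d \<Rightarrow> real) \<Rightarrow> real^'d \<Rightarrow> real" where
  "iter_partial [] \<phi> = \<phi>"
| "iter_partial (i # is) \<phi> = partial_deriv i (iter_partial is \<phi>)"

definition smooth_fun :: "(real^'d::finite \<Rightarrow> real) \<Rightarrow> bool" where
  "smooth_fun \<phi> \<longleftrightarrow> (\<forall>is x. iter_partial is \<phi> differentiable (at x))"

definition test_fun :: "(real^'d::finite \<Rightarrow> real) \<Rightarrow> bool" where
  "test_fun \<phi> \<longleftrightarrow> smooth_fun \<phi> \<and> periodic \<phi>"

definition weak_partial :: "'d::finite \<Rightarrow> (real^'d \<Rightarrow> real) \<Rightarrow> (real^'d \<Rightarrow> real) \<Rightarrow> bool" where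
  "weak_partial i f g \<longleftrightarrow>
     (\<forall>\<phi>. test_fun \<phi> \<longrightarrow>
        (\<integral>x. f x * partial_deriv i \<phi> x \<partial>\<mu>\<^sub>T) = - (\<integral>x. g x * \<phi> x \<partial>\<mu>\<^sub>T))"

definition Lp_fun :: "real \<Rightarrow> (real^'d::finite \<Rightarrow> real) \<Rightarrow> bool" where
  "Lp_fun p f \<longleftrightarrow> f \<in> borel_measurable \<mu>\<^sub>T \<and> integrable \<mu>\<^sub>T (\<lambda>x. \<bar>f x\<bar> powr p)"

definition W1p_bounded :: "real \<Rightarrow> real \<Rightarrow> (real^'d::finite \<Rightarrow> real^'d) \<Rightarrow> bool" where
  "W1p_bounded p C v \<longleftrightarrow> periodic v \<and>
     (\<exists>G :: 'd \<Rightarrow> 'd \<Rightarrow> real^'d \<Rightarrow> real.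
        (\<forall>j. Lp_fun p (\<lambda>x. v x $ j)) \<and>
        (\<forall>i j. Lp_fun p (G i j) \<and> weak_partial i (\<lambda>x. v x $ j) (G i j)) \<and>
        (\<Sum>j\<in>UNIV. \<integral>x. \<bar>v x $ j\<bar> powr p \<partial>\<mu>\<^sub>T)
          + (\<Sum>i\<in>UNIV. \<Sum>j\<in>UNIV. \<integral>x. \<bar>G i j x\<bar> powr p \<partial>\<mu>\<^sub>T) \<le> C)"

definition Linf_W1p :: "real \<Rightarrow> (real \<Rightarrow> real^'d::finite \<Rightarrow> real^'d) \<Rightarrow> bool" where
  "Linf_W1p p u \<longleftrightarrow>
     (\<lambda>(t, x). u t x) \<in> borel_measurable (borel \<Otimes>\<^sub>M borel) \<and>
     (\<forall>t. periodic (u t)) \<and>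
     (\<exists>C. AE t in lebesgue_on {0..}. W1p_bounded p C (u t))"

definition div_free :: "(real \<Rightarrow> real^'d::finite \<Rightarrow> real^'d) \<Rightarrow> bool" where
  "div_free u \<longleftrightarrow>
     (AE t in lebesgue_on {0..}. \<forall>\<phi>. test_fun \<phi> \<longrightarrow>
        (\<integral>x. (\<Sum>i\<in>UNIV. u t x $ i * partial_deriv i \<phi> x) \<partial>\<mu>\<^sub>T) = 0)"

definition measure_pres :: "(real^'d::finite \<Rightarrow> real^'d) \<Rightarrow> bool" where
  "measure_pres T \<longleftrightarrow> T \<in> measurable \<mu>\<^sub>T \<mu>\<^sub>T \<and> distr \<mu>\<^sub>T \<mu>\<^sub>T T = \<mu>\<^sub>T"

definition is_flow_inverse :: "(real^'d::finite \<Rightarrow> real^'d) \<Rightarrow> (real^'d \<Rightarrow> real^'d) \<Rightarrow> bool" where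
  "is_flow_inverse T S \<longleftrightarrow> measure_pres S \<and>
     (AE x in \<mu>\<^sub>T. S (T x) = x) \<and> (AE x in \<mu>\<^sub>T. T (S x) = x)"

text \<open>t \<mapsto> \<Phi> t x solves \<gamma>' = u(t,\<gamma>), \<gamma>(0) = x on T^d: there is a continuous lift
  \<gamma> to R^d solving the integral form of the ODE, whose projection is \<Phi> t x.\<close>
definition solves_ode :: "(real \<Rightarrow> real^'d::finite \<Rightarrow> real^'d) \<Rightarrow> (real \<Rightarrow> real^'d) \<Rightarrow> real^'d \<Rightarrow> bool" where
  "solves_ode u c x \<longleftrightarrow>
     (\<exists>\<gamma>. continuous_on {0..} \<gamma> \<and>
        (\<forall>t\<ge>0. (\<lambda>s. u s (\<gamma> s)) integrable_on {0..t} \<and>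
               \<gamma> t = x + integral {0..t} (\<lambda>s. u s (\<gamma> s)) \<and>
               torus_proj (\<gamma> t) = c t))"

definition DiPerna_Lions_flow :: "(real \<Rightarrow> real^'d::finite \<Rightarrow> real^'d) \<Rightarrow> (real \<Rightarrow> real^'d \<Rightarrow> real^'d) \<Rightarrow> bool" where
  "DiPerna_Lions_flow u \<Phi> \<longleftrightarrow>
     (\<forall>t\<ge>0. measure_pres (\<Phi> t) \<and> (\<exists>S. is_flow_inverse (\<Phi> t) S)) \<and>
     (AE x in \<mu>\<^sub>T. solves_ode u (\<lambda>t. \<Phi> t x) x)"

definition flow_inv :: "(real \<Rightarrow> real^'d::finite \<Rightarrow> real^'d) \<Rightarrow> real \<Rightarrow> real^'d \<Rightarrow> real^'d" where
  "flow_inv \<Phi> t = (SOME S. is_flow_inverse (\<Phi> t) S)"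

text \<open>\<rho> \<circ> \<Phi>_t^{-1}: the solution of the transport equation at time t.\<close>
definition transported :: "(real \<Rightarrow> real^'d::finite \<Rightarrow> real^'d) \<Rightarrow> real \<Rightarrow> (real^'d \<Rightarrow> real) \<Rightarrow> real^'d \<Rightarrow> real" where
  "transported \<Phi> t \<rho> = \<rho> \<circ> flow_inv \<Phi> t"

definition Linf :: "(real^'d::finite \<Rightarrow> real) set" where
  "Linf = {\<rho>. \<rho> \<in> borel_measurable \<mu>\<^sub>T \<and> (\<exists>C. AE x in \<mu>\<^sub>T. \<bar>\<rho> x\<bar> \<le> C)}"

definition L2_dist :: "(real^'d::finite \<Rightarrow> real) \<Rightarrow> (real^'d \<Rightarrow> real) \<Rightarrow> real" where
  "L2_dist f g = sqrt (\<integral>x. (f x - g x)\<^sup>2 \<partial>\<mu>\<^sub>T)"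

text \<open>Precompact (relatively compact) in the complete space L^2: every sequence
  has an L^2-Cauchy subsequence.\<close>
definition L2_precompact :: "(real^'d::finite \<Rightarrow> real) set \<Rightarrow> bool" where
  "L2_precompact A \<longleftrightarrow>
     (\<forall>f :: nat \<Rightarrow> _. (\<forall>n. f n \<in> A) \<longrightarrow>
        (\<exists>r :: nat \<Rightarrow> nat. strict_mono r \<and>
           (\<forall>e>0. \<exists>N. \<forall>m\<ge>N. \<forall>n\<ge>N. L2_dist (f (r m)) (f (r n)) < e)))"

definition mixed_data :: "(real \<Rightarrow> real^'d::finite \<Rightarrow> real^'d) \<Rightarrow> (real^'d \<Rightarrow> real) set" ("\<F>") where
  "\<F> \<Phi> = {\<rho> \<in> Linf. \<not> L2_precompact {transported \<Phi> t \<rho> | t. t \<ge> 0}}"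

definition N_sets :: "(real \<Rightarrow> real^'d::finite \<Rightarrow> real^'d) \<Rightarrow> (real^'d) set set" ("\<N>") where
  "\<N> \<Phi> = {D \<in> sets \<mu>\<^sub>T. indicator D \<notin> \<F> \<Phi>}"

definition N_measurable :: "(real \<Rightarrow> real^'d::finite \<Rightarrow> real^'d) \<Rightarrow> (real^'d \<Rightarrow> real) \<Rightarrow> bool" where
  "N_measurable \<Phi> \<rho> \<longleftrightarrow>
     (\<forall>\<alpha>. \<exists>D \<in> \<N> \<Phi>. emeasure \<mu>\<^sub>T ({x \<in> torus_cube. \<rho> x \<ge> \<alpha>} - D) = 0
                       \<and> emeasure \<mu>\<^sub>T (D - {x \<in> torus_cube. \<rho> x \<ge> \<alpha>}) = 0)"

end

theory Submission
  imports Defs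
begin

lemma torus_cube_lmeas: "(torus_cube :: (real^'d::finite) set) \<in> lmeasurable"
proof -
  have "torus_cube \<subseteq> cbox (0::real^'d) 1"
    by (auto simp: torus_cube_def mem_box_cart less_imp_le)
  hence b: "bounded (torus_cube :: (real^'d::finite) set)"
    using bounded_cbox bounded_subset by blast
  have "(torus_cube :: (real^'d::finite) set) = (\<Inter>i. {x. 0 \<le> x$i}) \<inter> (\<Inter>i. {x. x$i < 1})"
    by (auto simp: torus_cube_def)
  moreover have "(\<Inter>i. {x::real^'d. 0 \<le> x$i}) \<in> sets lebesgue"
    by (intro borel_closed sets.countable_INT' closed_Collect_le continuous_intros) auto
  moreover have "(\<Inter>i. {x::real^'d. x$i < 1}) \<in> sets lebesgue"
    by (intro borel_open sets.countable_INT' open_Collect_less continuous_intros) auto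
  ultimately have "(torus_cube :: (real^'d::finite) set) \<in> sets lebesgue" by (metis sets.Int)
  with b show ?thesis by (simp add: bounded_set_imp_lmeasurable)
qed

lemma fm: "finite_measure (\<mu>\<^sub>T :: (real^'d::finite) measure)"
  by (rule finite_measure_lebesgue_on[OF torus_cube_lmeas])

lemma LinfD: assumes "f \<in> Linf" shows "f \<in> borel_measurable \<mu>\<^sub>T" "\<exists>C. AE x in \<mu>\<^sub>T. \<bar>f x\<bar> \<le> C"
  using assms by (auto simp: Linf_def)

lemma LinfI: "f \<in> borel_measurable \<mu>\<^sub>T \<Longrightarrow> AE x in \<mu>\<^sub>T. \<bar>f x\<bar> \<le> C \<Longrightarrow> f \<in> Linf"
  by (auto simp: Linf_def)

lemma Linf_integrable: assumes "(f::real^'d::finite \<Rightarrow> real) \<in> Linf" shows "integrable \<mu>\<^sub>T f"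
proof -
  obtain C where "AE x in \<mu>\<^sub>T. \<bar>f x\<bar> \<le> C" using LinfD[OF assms] by blast
  then show ?thesis using finite_measure.integrable_const_bound[OF fm, of f C] LinfD[OF assms] by auto
qed

lemma Linf_const: "(\<lambda>x. c) \<in> Linf"
  by (rule LinfI[where C="\<bar>c\<bar>"]) auto

lemma Linf_add: assumes "f \<in> Linf" "g \<in> Linf" shows "(\<lambda>x. f x + g x) \<in> Linf"
proof -
  obtain C where C: "AE x in \<mu>\<^sub>T. \<bar>f x\<bar> \<le> C" using LinfD[OF assms(1)] by blast
  obtain D where D: "AE x in \<mu>\<^sub>T. \<bar>g x\<bar> \<le> D" using LinfD[OF assms(2)] by blast
  show ?thesis
    by (rule LinfI[where C="C+D"]) (use LinfD assms C D in \<open>auto intro: borel_measurable_add\<close>)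
qed

lemma Linf_mult: assumes "f \<in> Linf" "g \<in> Linf" shows "(\<lambda>x. f x * g x) \<in> Linf"
proof -
  obtain C where C: "AE x in \<mu>\<^sub>T. \<bar>f x\<bar> \<le> C" using LinfD[OF assms(1)] by blast
  obtain D where D: "AE x in \<mu>\<^sub>T. \<bar>g x\<bar> \<le> D" using LinfD[OF assms(2)] by blast
  have "AE x in \<mu>\<^sub>T. \<bar>f x * g x\<bar> \<le> C * D"
    using C D by eventually_elim (auto simp: abs_mult intro!: mult_mono)
  then show ?thesis
    by (intro LinfI[where C="C*D"]) (use LinfD assms in \<open>auto intro: borel_measurable_times\<close>)
qed

lemma Linf_lip: assumes "f \<in> Linf" "continuous_on UNIV h" "\<And>a b. \<bar>h a - h b\<bar> \<le> L * \<bar>a - b\<bar>"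
  shows "(\<lambda>x. h (f x)) \<in> Linf"
proof -
  obtain C where C: "AE x in \<mu>\<^sub>T. \<bar>f x\<bar> \<le> C" using LinfD[OF assms(1)] by blast
  have "AE x in \<mu>\<^sub>T. \<bar>h (f x)\<bar> \<le> \<bar>h 0\<bar> + \<bar>L\<bar> * C"
    using C
  proof eventually_elim
    case (elim x)
    have "\<bar>h (f x) - h 0\<bar> \<le> L * \<bar>f x\<bar>" using assms(3)[of "f x" 0] by simp
    also have "\<dots> \<le> \<bar>L\<bar> * \<bar>f x\<bar>" by (simp add: mult_right_mono)
    also have "\<dots> \<le> \<bar>L\<bar> * C" using elim by (simp add: mult_left_mono)
    finally show ?case by linarith
  qed
  moreover have "(\<lambda>x. h (f x)) \<in> borel_measurable \<mu>\<^sub>T"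
    using measurable_comp[OF LinfD(1)[OF assms(1)] borel_measurable_continuous_onI[OF assms(2)]]
    by (simp add: o_def)
  ultimately show ?thesis by (intro LinfI)
qed

lemma Linf_diff: assumes "f \<in> Linf" "g \<in> Linf" shows "(\<lambda>x. f x - g x) \<in> Linf"
proof -
  have "(\<lambda>x. (-1) * g x) \<in> Linf" by (rule Linf_mult[OF Linf_const assms(2)])
  from Linf_add[OF assms(1) this] show ?thesis by simp
qed

lemma Linf_sq: assumes "f \<in> Linf" shows "(\<lambda>x. (f x)\<^sup>2) \<in> Linf"
  using Linf_mult[OF assms assms] by (simp add: power2_eq_square)

lemma Linf_mp: assumes "measure_pres S" "f \<in> Linf" shows "f \<circ> S \<in> Linf"
proof -
  have S: "S \<in> measurable \<mu>\<^sub>T \<mu>\<^sub>T" and d: "distr \<mu>\<^sub>T \<mu>\<^sub>T S = \<mu>\<^sub>T" using assms(1) by (auto simp: measure_pres_def)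
  obtain C where C: "AE x in \<mu>\<^sub>T. \<bar>f x\<bar> \<le> C" using LinfD[OF assms(2)] by blast
  have fm: "f \<in> borel_measurable \<mu>\<^sub>T" using LinfD(1)[OF assms(2)] .
  have "AE x in distr \<mu>\<^sub>T \<mu>\<^sub>T S. \<bar>f x\<bar> \<le> C" unfolding d using C .
  then have "AE x in \<mu>\<^sub>T. \<bar>f (S x)\<bar> \<le> C"
  proof (subst (asm) AE_distr_iff[OF S])
    show "{x \<in> space \<mu>\<^sub>T. \<bar>f x\<bar> \<le> C} \<in> sets \<mu>\<^sub>T"
      using fm by measurable
  qed
  moreover have "f \<circ> S \<in> borel_measurable \<mu>\<^sub>T" using measurable_comp[OF S fm] .
  ultimately show ?thesis by (intro LinfI[where C=C]) auto
qed


lemma L2_dist_nonneg: "0 \<le> L2_dist f g"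
  unfolding L2_dist_def by (intro real_sqrt_ge_zero integral_nonneg) auto

lemma L2_dist_commute: "L2_dist f g = L2_dist g f"
  unfolding L2_dist_def by (simp add: power2_commute)

lemma L2_dist_self: "L2_dist f f = 0"
  unfolding L2_dist_def by simp

lemma alg1:
  fixes a b t :: real assumes t: "t > 0"
  shows "(a+b)^2 \<le> (1+t)*a^2 + (1+1/t)*b^2"
proof -
  have "t*((1+t)*a^2 + (1+1/t)*b^2) - t*(a+b)^2 = (t*a-b)^2"
    using t by (simp add: field_simps power2_eq_square)
  then have "t*(a+b)^2 \<le> t*((1+t)*a^2 + (1+1/t)*b^2)" by (smt (verit) zero_le_power2)
  then show ?thesis using t by (simp add: mult_le_cancel_left)
qed

lemma minkowski:
  assumes u: "u \<in> Linf" and v: "v \<in> Linf"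
  shows "sqrt (\<integral>x. (u x + v x)\<^sup>2 \<partial>\<mu>\<^sub>T) \<le> sqrt (\<integral>x. (u x)\<^sup>2 \<partial>\<mu>\<^sub>T) + sqrt (\<integral>x. (v x)\<^sup>2 \<partial>\<mu>\<^sub>T)"
proof -
  define A where "A = (\<integral>x. (u x)\<^sup>2 \<partial>\<mu>\<^sub>T)"
  define B where "B = (\<integral>x. (v x)\<^sup>2 \<partial>\<mu>\<^sub>T)"
  have iu: "integrable \<mu>\<^sub>T (\<lambda>x. (u x)\<^sup>2)" by (rule Linf_integrable[OF Linf_sq[OF u]])
  have iv: "integrable \<mu>\<^sub>T (\<lambda>x. (v x)\<^sup>2)" by (rule Linf_integrable[OF Linf_sq[OF v]])
  have iuv: "integrable \<mu>\<^sub>T (\<lambda>x. (u x + v x)\<^sup>2)" by (rule Linf_integrable[OF Linf_sq[OF Linf_add[OF u v]]])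
  have A0: "A \<ge> 0" unfolding A_def by (intro integral_nonneg_AE) auto
  have B0: "B \<ge> 0" unfolding B_def by (intro integral_nonneg_AE) auto
  show ?thesis
  proof (cases "A = 0 \<or> B = 0")
    case True
    then show ?thesis
    proof
      assume "A = 0"
      then have "AE x in \<mu>\<^sub>T. (u x)\<^sup>2 = 0" unfolding A_def
        using integral_nonneg_eq_0_iff_AE[OF iu] by auto
      then have "AE x in \<mu>\<^sub>T. (u x + v x)\<^sup>2 = (v x)\<^sup>2" by eventually_elim simp
      then have "(\<integral>x. (u x + v x)\<^sup>2 \<partial>\<mu>\<^sub>T) = B" unfolding B_def
        by (intro integral_cong_AE) (use iuv iv in auto)
      then show ?thesis using \<open>A = 0\<close> by (simp add: A_def B_def)
    next
      assume "B = 0"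
      then have "AE x in \<mu>\<^sub>T. (v x)\<^sup>2 = 0" unfolding B_def
        using integral_nonneg_eq_0_iff_AE[OF iv] by auto
      then have "AE x in \<mu>\<^sub>T. (u x + v x)\<^sup>2 = (u x)\<^sup>2" by eventually_elim simp
      then have "(\<integral>x. (u x + v x)\<^sup>2 \<partial>\<mu>\<^sub>T) = A" unfolding A_def
        by (intro integral_cong_AE) (use iuv iu in auto)
      then show ?thesis using \<open>B = 0\<close> by (simp add: A_def B_def)
    qed
  next
    case False
    define a where "a = sqrt A"
    define b where "b = sqrt B"
    have ap: "a > 0" and bp: "b > 0" using False A0 B0 by (auto simp: a_def b_def)
    have Aa: "A = a^2" and Bb: "B = b^2" using A0 B0 by (auto simp: a_def b_def)
    define t where "t = b / a"
    have tp: "t > 0" using ap bp by (simp add: t_def)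
    have "(\<integral>x. (u x + v x)\<^sup>2 \<partial>\<mu>\<^sub>T) \<le> (\<integral>x. (1+t)*(u x)\<^sup>2 + (1+1/t)*(v x)\<^sup>2 \<partial>\<mu>\<^sub>T)"
      by (intro integral_mono iuv Bochner_Integration.integrable_add integrable_mult_right iu iv alg1 tp)
    also have "\<dots> = (1+t)*A + (1+1/t)*B"
      unfolding A_def B_def
      by (subst Bochner_Integration.integral_add) (use iu iv in auto)
    also have "\<dots> = (a + b)^2"
      unfolding Aa Bb t_def using ap bp by (simp add: field_simps power2_eq_square)
    finally have "sqrt (\<integral>x. (u x + v x)\<^sup>2 \<partial>\<mu>\<^sub>T) \<le> sqrt ((a+b)^2)" by (rule real_sqrt_le_mono)
    also have "\<dots> = a + b" using ap bp by simp
    finally show ?thesis by (simp add: a_def b_def A_def B_def)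
  qed
qed

lemma L2_triangle:
  assumes "f \<in> Linf" "g \<in> Linf" "h \<in> Linf"
  shows "L2_dist f h \<le> L2_dist f g + L2_dist g h"
  using minkowski[OF Linf_diff[OF assms(1,2)] Linf_diff[OF assms(2,3)]]
  by (simp add: L2_dist_def)

lemma L2_add:
  assumes "f \<in> Linf" "g \<in> Linf" "a \<in> Linf" "b \<in> Linf"
  shows "L2_dist (\<lambda>x. f x + g x) (\<lambda>x. a x + b x) \<le> L2_dist f a + L2_dist g b"
proof -
  have e: "(\<lambda>x. (f x + g x - (a x + b x))\<^sup>2) = (\<lambda>x. ((f x - a x) + (g x - b x))\<^sup>2)"
    by (rule ext) (simp add: algebra_simps)
  show ?thesis
    using minkowski[OF Linf_diff[OF assms(1,3)] Linf_diff[OF assms(2,4)]]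
    by (simp add: L2_dist_def e)
qed

lemma L2_lip:
  assumes "f \<in> Linf" "g \<in> Linf" "continuous_on UNIV h" "\<And>a b. \<bar>h a - h b\<bar> \<le> L * \<bar>a - b\<bar>" "L \<ge> 0"
  shows "L2_dist (\<lambda>x. h (f x)) (\<lambda>x. h (g x)) \<le> L * L2_dist f g"
proof -
  have hf: "(\<lambda>x. h (f x)) \<in> Linf" by (rule Linf_lip[OF assms(1,3,4)])
  have hg: "(\<lambda>x. h (g x)) \<in> Linf" by (rule Linf_lip[OF assms(2,3,4)])
  have pw: "(h a - h b)\<^sup>2 \<le> L\<^sup>2 * (a - b)\<^sup>2" for a b
  proof -
    have "(h a - h b)\<^sup>2 = \<bar>h a - h b\<bar>\<^sup>2" by simp
    also have "\<dots> \<le> (L * \<bar>a - b\<bar>)\<^sup>2" by (rule power_mono[OF assms(4)]) simp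
    also have "\<dots> = L\<^sup>2 * (a - b)\<^sup>2" by (simp add: power_mult_distrib)
    finally show ?thesis .
  qed
  have "(\<integral>x. (h (f x) - h (g x))\<^sup>2 \<partial>\<mu>\<^sub>T) \<le> (\<integral>x. L\<^sup>2 * (f x - g x)\<^sup>2 \<partial>\<mu>\<^sub>T)"
    by (intro integral_mono pw Linf_integrable Linf_sq Linf_diff hf hg integrable_mult_right assms(1,2))
  also have "\<dots> = L\<^sup>2 * (\<integral>x. (f x - g x)\<^sup>2 \<partial>\<mu>\<^sub>T)" by simp
  finally have "sqrt (\<integral>x. (h (f x) - h (g x))\<^sup>2 \<partial>\<mu>\<^sub>T) \<le> sqrt (L\<^sup>2 * (\<integral>x. (f x - g x)\<^sup>2 \<partial>\<mu>\<^sub>T))"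
    by (rule real_sqrt_le_mono)
  also have "\<dots> = L * sqrt (\<integral>x. (f x - g x)\<^sup>2 \<partial>\<mu>\<^sub>T)" using assms(5) by (simp add: real_sqrt_mult)
  finally show ?thesis by (simp add: L2_dist_def)
qed

lemma L2_AE:
  assumes "f \<in> Linf" "g \<in> Linf" "AE x in \<mu>\<^sub>T. f x = g x"
  shows "L2_dist f g = 0"
proof -
  have "(\<integral>x. (f x - g x)\<^sup>2 \<partial>\<mu>\<^sub>T) = 0"
    by (rule integral_eq_zero_AE) (use assms(3) in \<open>eventually_elim, simp\<close>)
  then show ?thesis by (simp add: L2_dist_def)
qed

lemma L2_mp:
  assumes "measure_pres S" "f \<in> Linf" "g \<in> Linf"
  shows "L2_dist (f \<circ> S) (g \<circ> S) = L2_dist f g"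
proof -
  have S: "S \<in> measurable \<mu>\<^sub>T \<mu>\<^sub>T" and d: "distr \<mu>\<^sub>T \<mu>\<^sub>T S = \<mu>\<^sub>T" using assms(1) by (auto simp: measure_pres_def)
  have m: "(\<lambda>x. (f x - g x)\<^sup>2) \<in> borel_measurable \<mu>\<^sub>T"
    using LinfD(1)[OF Linf_sq[OF Linf_diff[OF assms(2,3)]]] .
  have "(\<integral>x. ((f \<circ> S) x - (g \<circ> S) x)\<^sup>2 \<partial>\<mu>\<^sub>T) = (\<integral>x. (f x - g x)\<^sup>2 \<partial>(distr \<mu>\<^sub>T \<mu>\<^sub>T S))"
    by (subst integral_distr[OF S m]) simp
  also have "\<dots> = (\<integral>x. (f x - g x)\<^sup>2 \<partial>\<mu>\<^sub>T)" unfolding d ..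
  finally show ?thesis by (simp add: L2_dist_def)
qed


definition TB :: "(real^'d::finite \<Rightarrow> real) set \<Rightarrow> bool" where
  "TB A \<longleftrightarrow> (\<forall>e>0. \<exists>F. finite F \<and> F \<subseteq> Linf \<and> (\<forall>f\<in>A. \<exists>g\<in>F. L2_dist f g < e))"

definition cls :: "(real^'d::finite \<Rightarrow> real) \<Rightarrow> (real^'d \<Rightarrow> real) set" where
  "cls f = {g \<in> Linf. L2_dist f g = 0}"

definition rep :: "(real^'d::finite \<Rightarrow> real) set \<Rightarrow> (real^'d \<Rightarrow> real)" where
  "rep X = (SOME g. g \<in> X)"

definition dq :: "(real^'d::finite \<Rightarrow> real) set \<Rightarrow> (real^'d \<Rightarrow> real) set \<Rightarrow> real" where
  "dq X Y = L2_dist (rep X) (rep Y)"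

lemma rep_cls: assumes "f \<in> Linf" shows "rep (cls f) \<in> Linf" "L2_dist f (rep (cls f)) = 0"
proof -
  have "f \<in> cls f" using assms by (simp add: cls_def L2_dist_self)
  then have "rep (cls f) \<in> cls f" unfolding rep_def by (rule someI[where P="\<lambda>g. g \<in> cls f"])
  then show "rep (cls f) \<in> Linf" "L2_dist f (rep (cls f)) = 0" by (auto simp: cls_def)
qed

lemma dq_cls: assumes "f \<in> Linf" "g \<in> Linf" shows "dq (cls f) (cls g) = L2_dist f g"
proof -
  note r = rep_cls[OF assms(1)] rep_cls[OF assms(2)]
  have "L2_dist (rep (cls f)) (rep (cls g)) \<le> L2_dist (rep (cls f)) f + L2_dist f (rep (cls g))"
    by (rule L2_triangle) (use r assms in auto)
  also have "L2_dist f (rep (cls g)) \<le> L2_dist f g + L2_dist g (rep (cls g))"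
    by (rule L2_triangle) (use r assms in auto)
  finally have 1: "L2_dist (rep (cls f)) (rep (cls g)) \<le> L2_dist f g"
    using r by (simp add: L2_dist_commute)
  have "L2_dist f g \<le> L2_dist f (rep (cls f)) + L2_dist (rep (cls f)) g"
    by (rule L2_triangle) (use r assms in auto)
  also have "L2_dist (rep (cls f)) g \<le> L2_dist (rep (cls f)) (rep (cls g)) + L2_dist (rep (cls g)) g"
    by (rule L2_triangle) (use r assms in auto)
  finally have 2: "L2_dist f g \<le> L2_dist (rep (cls f)) (rep (cls g))"
    using r by (simp add: L2_dist_commute)
  show ?thesis using 1 2 by (simp add: dq_def)
qed

lemma cls_eq: assumes "f \<in> Linf" "g \<in> Linf" shows "cls f = cls g \<longleftrightarrow> L2_dist f g = 0"
proof
  assume "cls f = cls g"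
  then show "L2_dist f g = 0" using dq_cls[OF assms] dq_cls[OF assms(1) assms(1)]
    by (simp add: L2_dist_self)
next
  assume 0: "L2_dist f g = 0"
  have "L2_dist f h = 0 \<longleftrightarrow> L2_dist g h = 0" if "h \<in> Linf" for h
  proof -
    have "L2_dist f h \<le> L2_dist f g + L2_dist g h" "L2_dist g h \<le> L2_dist g f + L2_dist f h"
      using L2_triangle assms that by blast+
    then show ?thesis using 0 L2_dist_nonneg[of f h] L2_dist_nonneg[of g h] by (simp add: L2_dist_commute)
  qed
  then show "cls f = cls g" by (auto simp: cls_def)
qed

lemma metric_dq: "Metric_space (cls ` (Linf :: (real^'d::finite \<Rightarrow> real) set)) dq"
proof
  fix x y :: "(real^'d \<Rightarrow> real) set"
  show "0 \<le> dq x y" by (simp add: dq_def L2_dist_nonneg)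
  show "dq x y = dq y x" by (simp add: dq_def L2_dist_commute)
next
  fix x y :: "(real^'d \<Rightarrow> real) set"
  assume "x \<in> cls ` Linf" "y \<in> cls ` Linf"
  then obtain f g where "f \<in> Linf" "g \<in> Linf" "x = cls f" "y = cls g" by auto
  then show "dq x y = 0 \<longleftrightarrow> x = y" by (simp add: dq_cls cls_eq)
next
  fix x y z :: "(real^'d \<Rightarrow> real) set"
  assume "x \<in> cls ` Linf" "y \<in> cls ` Linf" "z \<in> cls ` Linf"
  then obtain f g h where "f \<in> Linf" "g \<in> Linf" "h \<in> Linf" "x = cls f" "y = cls g" "z = cls h" by auto
  then show "dq x z \<le> dq x y + dq y z" by (simp add: dq_cls L2_triangle)
qed

lemma precompact_iff_TB:
  fixes A :: "(real^'d::finite \<Rightarrow> real) set"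
  assumes A: "A \<subseteq> Linf"
  shows "L2_precompact A \<longleftrightarrow> TB A"
proof -
  interpret Q: Metric_space "cls ` (Linf :: (real^'d::finite \<Rightarrow> real) set)" dq by (rule metric_dq)
  have seq: "L2_precompact A \<longleftrightarrow> Q.mtotally_bounded (cls ` A)"
    unfolding Q.mtotally_bounded_sequentially L2_precompact_def
  proof (intro iffI conjI allI impI)
    show "cls ` A \<subseteq> cls ` Linf" using A by (rule image_mono)
  next
    fix \<sigma> :: "nat \<Rightarrow> (real^'d \<Rightarrow> real) set"
    assume P: "\<forall>f. (\<forall>n. f n \<in> A) \<longrightarrow> (\<exists>r::nat\<Rightarrow>nat. strict_mono r \<and> (\<forall>e>0. \<exists>N. \<forall>m\<ge>N. \<forall>n\<ge>N. L2_dist (f (r m)) (f (r n)) < e))"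
      and s: "range \<sigma> \<subseteq> cls ` A"
    define f where "f k = (SOME f. f \<in> A \<and> \<sigma> k = cls f)" for k :: nat
    have f: "f k \<in> A \<and> \<sigma> k = cls (f k)" for k
    proof -
      have "\<exists>f. f \<in> A \<and> \<sigma> k = cls f" using s by blast
      then show ?thesis unfolding f_def by (rule someI_ex)
    qed
    have fL: "f k \<in> Linf" for k using f A by blast
    have fA: "\<forall>n. f n \<in> A" using f by blast
    have "\<exists>r::nat\<Rightarrow>nat. strict_mono r \<and> (\<forall>e>0. \<exists>N. \<forall>m\<ge>N. \<forall>n\<ge>N. L2_dist (f (r m)) (f (r n)) < e)"
      using P fA by metis
    then obtain r :: "nat \<Rightarrow> nat" where r: "strict_mono r" "\<forall>e>0. \<exists>N. \<forall>m\<ge>N. \<forall>n\<ge>N. L2_dist (f (r m)) (f (r n)) < e"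
      by (elim exE conjE)
    have dqe: "dq ((\<sigma> \<circ> r) n) ((\<sigma> \<circ> r) n') = L2_dist (f (r n)) (f (r n'))" for n n'
      using f[of "r n"] f[of "r n'"] dq_cls[OF fL fL] by simp
    have "Q.MCauchy (\<sigma> \<circ> r)"
      unfolding Q.MCauchy_def
    proof (intro conjI allI impI)
      show "range (\<sigma> \<circ> r) \<subseteq> cls ` Linf"
      proof
        fix y assume "y \<in> range (\<sigma> \<circ> r)"
        then obtain k where "y = \<sigma> (r k)" by auto
        then show "y \<in> cls ` Linf" using f[of "r k"] fL[of "r k"] by blast
      qed
      fix e :: real assume "e > 0"
      from r(2)[rule_format, OF this] obtain N where N: "\<forall>m\<ge>N. \<forall>n\<ge>N. L2_dist (f (r m)) (f (r n)) < e" by blast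
      show "\<exists>N. \<forall>n n'. N \<le> n \<longrightarrow> N \<le> n' \<longrightarrow> dq ((\<sigma> \<circ> r) n) ((\<sigma> \<circ> r) n') < e"
        unfolding dqe using N by (intro exI[of _ N]) simp
    qed
    then show "\<exists>r::nat\<Rightarrow>nat. strict_mono r \<and> Q.MCauchy (\<sigma> \<circ> r)" using r by blast
  next
    fix f :: "nat \<Rightarrow> real^'d \<Rightarrow> real"
    assume P: "cls ` A \<subseteq> cls ` Linf \<and> (\<forall>\<sigma>. range \<sigma> \<subseteq> cls ` A \<longrightarrow> (\<exists>r::nat\<Rightarrow>nat. strict_mono r \<and> Q.MCauchy (\<sigma> \<circ> r)))"
      and f: "\<forall>n. f n \<in> A"
    have fL: "f k \<in> Linf" for k using f A by blast
    have "range (cls \<circ> f) \<subseteq> cls ` A" using f by auto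
    from P[THEN conjunct2, rule_format, OF this] obtain r :: "nat \<Rightarrow> nat" where r: "strict_mono r" "Q.MCauchy ((cls \<circ> f) \<circ> r)"
      by (elim exE conjE)
    have "\<forall>e>0. \<exists>N. \<forall>m\<ge>N. \<forall>n\<ge>N. L2_dist (f (r m)) (f (r n)) < e"
    proof (intro allI impI)
      fix e :: real assume "e > 0"
      then obtain N where N: "\<forall>n n'. N \<le> n \<longrightarrow> N \<le> n' \<longrightarrow> dq (((cls \<circ> f) \<circ> r) n) (((cls \<circ> f) \<circ> r) n') < e"
        using r(2) \<open>e > 0\<close> unfolding Q.MCauchy_def by (elim conjE) (erule allE[of _ e], blast)
      have "dq (((cls \<circ> f) \<circ> r) n) (((cls \<circ> f) \<circ> r) n') = L2_dist (f (r n)) (f (r n'))" for n n'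
        using dq_cls[OF fL fL] by simp
      then show "\<exists>N. \<forall>m\<ge>N. \<forall>n\<ge>N. L2_dist (f (r m)) (f (r n)) < e"
        using N by (intro exI[of _ N]) simp
    qed
    then show "\<exists>r::nat\<Rightarrow>nat. strict_mono r \<and> (\<forall>e>0. \<exists>N. \<forall>m\<ge>N. \<forall>n\<ge>N. L2_dist (f (r m)) (f (r n)) < e)"
      using r by blast
  qed
  have tb: "Q.mtotally_bounded (cls ` A) \<longleftrightarrow> TB A"
    unfolding Q.mtotally_bounded_def TB_def
  proof (intro iffI allI impI)
    fix e :: real assume P: "\<forall>e>0. \<exists>K. finite K \<and> K \<subseteq> cls ` A \<and> cls ` A \<subseteq> (\<Union>x\<in>K. Q.mball x e)"
      and e: "e > 0"
    from P[rule_format, OF e] obtain K where K: "finite K" "K \<subseteq> cls ` A" "cls ` A \<subseteq> (\<Union>x\<in>K. Q.mball x e)"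
      by (elim exE conjE)
    have "\<forall>f\<in>A. \<exists>g\<in>rep ` K. L2_dist f g < e"
    proof
      fix f assume fA: "f \<in> A"
      have "cls f \<in> cls ` A" using fA by (rule imageI)
      then have "cls f \<in> (\<Union>x\<in>K. Q.mball x e)" using K(3) by (rule rev_subsetD)
      then obtain X where X: "X \<in> K" "cls f \<in> Q.mball X e" by (rule UN_E)
      then obtain g where g: "g \<in> A" "X = cls g" using K(2) by blast
      have fL: "f \<in> Linf" and gL: "g \<in> Linf" using fA g A by auto
      have "dq X (cls f) < e" using X(2) by (simp only: Q.in_mball)
      then have 1: "L2_dist g f < e" using g(2) dq_cls[OF gL fL] by simp
      have 2: "L2_dist f (rep (cls g)) \<le> L2_dist f g + L2_dist g (rep (cls g))"
        by (rule L2_triangle[OF fL gL rep_cls(1)[OF gL]])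
      have "L2_dist f (rep (cls g)) < e" using 1 2 rep_cls(2)[OF gL] L2_dist_commute[of f g] by linarith
      then have "L2_dist f (rep X) < e" using g(2) by simp
      then show "\<exists>g\<in>rep ` K. L2_dist f g < e" using X by blast
    qed
    moreover have "rep ` K \<subseteq> Linf"
    proof
      fix Y assume "Y \<in> rep ` K"
      then obtain X where "X \<in> K" "Y = rep X" by blast
      then obtain g where "g \<in> A" "X = cls g" using K(2) by blast
      then have "Y = rep (cls g)" "g \<in> Linf" using \<open>Y = rep X\<close> A by auto
      then show "Y \<in> Linf" using rep_cls(1)[of g] by simp
    qed
    moreover have "finite (rep ` K)" using K(1) by simp
    ultimately show "\<exists>F. finite F \<and> F \<subseteq> Linf \<and> (\<forall>f\<in>A. \<exists>g\<in>F. L2_dist f g < e)"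
      by blast
  next
    fix e :: real assume P: "\<forall>e>0. \<exists>F. finite F \<and> F \<subseteq> Linf \<and> (\<forall>f\<in>A. \<exists>g\<in>F. L2_dist f g < e)"
      and e: "e > 0"
    have "e/2 > 0" using e by simp
    from P[rule_format, OF this] obtain F where F: "finite F" "F \<subseteq> Linf" "\<forall>f\<in>A. \<exists>g\<in>F. L2_dist f g < e/2"
      by (elim exE conjE)
    define G where "G = {g \<in> F. \<exists>f\<in>A. L2_dist f g < e/2}"
    define ch where "ch g = (SOME f. f \<in> A \<and> L2_dist f g < e/2)" for g
    have ch: "ch g \<in> A \<and> L2_dist (ch g) g < e/2" if "g \<in> G" for g
    proof -
      have "\<exists>f. f \<in> A \<and> L2_dist f g < e/2" using that unfolding G_def by blast
      then show ?thesis unfolding ch_def by (rule someI_ex)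
    qed
    define K where "K = cls ` ch ` G"
    have "G \<subseteq> F" unfolding G_def by blast
    then have "finite K" using F(1) unfolding K_def by (meson finite_imageI finite_subset)
    moreover have "K \<subseteq> cls ` A"
    proof
      fix y assume "y \<in> K"
      then obtain g where "g \<in> G" "y = cls (ch g)" unfolding K_def by blast
      then show "y \<in> cls ` A" using ch[of g] by blast
    qed
    moreover have "cls ` A \<subseteq> (\<Union>x\<in>K. Q.mball x e)"
    proof
      fix y assume "y \<in> cls ` A"
      then obtain f where f: "f \<in> A" "y = cls f" by blast
      from F(3)[rule_format, OF f(1)] obtain g where g: "g \<in> F" "L2_dist f g < e/2" by blast
      then have gG: "g \<in> G" using f unfolding G_def by blast
      have fL: "f \<in> Linf" and cL: "ch g \<in> Linf" and gL: "g \<in> Linf" using f A ch[OF gG] g F(2) by auto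
      have "L2_dist (ch g) f \<le> L2_dist (ch g) g + L2_dist g f" by (rule L2_triangle[OF cL gL fL])
      then have "L2_dist (ch g) f < e" using ch[OF gG] g L2_dist_commute[of f g] by linarith
      then have "dq (cls (ch g)) (cls f) < e" using dq_cls[OF cL fL] by simp
      moreover have "cls (ch g) \<in> cls ` Linf" "cls f \<in> cls ` Linf" using cL fL by blast+
      ultimately have "cls f \<in> Q.mball (cls (ch g)) e" unfolding Q.in_mball by simp
      then have "y \<in> Q.mball (cls (ch g)) e" using f(2) by simp
      moreover have "cls (ch g) \<in> K" using gG unfolding K_def by blast
      ultimately show "y \<in> (\<Union>x\<in>K. Q.mball x e)" by (rule UN_I[rotated])
    qed
    ultimately show "\<exists>K. finite K \<and> K \<subseteq> cls ` A \<and> cls ` A \<subseteq> (\<Union>x\<in>K. Q.mball x e)" by blast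
  qed
  show ?thesis using seq tb by simp
qed


definition orb :: "(real^'d::finite \<Rightarrow> real^'d) set \<Rightarrow> (real^'d \<Rightarrow> real) \<Rightarrow> (real^'d \<Rightarrow> real) set" where
  "orb SS f = (\<lambda>S. f \<circ> S) ` SS"

lemma orb_Linf: assumes "\<forall>S\<in>SS. measure_pres S" "f \<in> Linf" shows "orb SS f \<subseteq> Linf"
  using assms Linf_mp unfolding orb_def by blast

lemma orb_approx:
  assumes SS: "\<forall>S\<in>SS. measure_pres S" and f: "f \<in> Linf"
    and ap: "\<And>e. e > 0 \<Longrightarrow> \<exists>g\<in>Linf. TB (orb SS g) \<and> L2_dist f g < e"
  shows "TB (orb SS f)"
  unfolding TB_def
proof (intro allI impI)
  fix e :: real assume e: "e > 0"
  then have "e/2 > 0" by simp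
  from ap[OF this] obtain g where g: "g \<in> Linf" "TB (orb SS g)" "L2_dist f g < e/2" by blast
  from g(2)[unfolded TB_def, rule_format, OF \<open>e/2 > 0\<close>] obtain F
    where F: "finite F" "F \<subseteq> Linf" "\<forall>h\<in>orb SS g. \<exists>a\<in>F. L2_dist h a < e/2"
    by (elim exE conjE)
  have "\<forall>h\<in>orb SS f. \<exists>a\<in>F. L2_dist h a < e"
  proof
    fix h assume "h \<in> orb SS f"
    then obtain S where S: "S \<in> SS" "h = f \<circ> S" unfolding orb_def by blast
    have "g \<circ> S \<in> orb SS g" using S(1) unfolding orb_def by blast
    from bspec[OF F(3) this] obtain a where a: "a \<in> F" "L2_dist (g \<circ> S) a < e/2" by (elim bexE) 
    have mp: "measure_pres S" using SS S(1) by blast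
    have "L2_dist (f \<circ> S) a \<le> L2_dist (f \<circ> S) (g \<circ> S) + L2_dist (g \<circ> S) a"
      by (rule L2_triangle) (use Linf_mp[OF mp] f g(1) a(1) F(2) in auto)
    also have "L2_dist (f \<circ> S) (g \<circ> S) = L2_dist f g" by (rule L2_mp[OF mp f g(1)])
    finally have "L2_dist (f \<circ> S) a < e" using a(2) g(3) by linarith
    then have "L2_dist h a < e" using S(2) by simp
    then show "\<exists>a\<in>F. L2_dist h a < e" using a(1) by blast
  qed
  then show "\<exists>F. finite F \<and> F \<subseteq> Linf \<and> (\<forall>h\<in>orb SS f. \<exists>a\<in>F. L2_dist h a < e)"
    using F(1,2) by blast
qed

lemma orb_lip:
  assumes SS: "\<forall>S\<in>SS. measure_pres S" and f: "f \<in> Linf" and tb: "TB (orb SS f)"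
    and h: "continuous_on UNIV h" "\<And>a b. \<bar>h a - h b\<bar> \<le> L * \<bar>a - b\<bar>" "L \<ge> 0"
  shows "TB (orb SS (\<lambda>x. h (f x)))"
  unfolding TB_def
proof (intro allI impI)
  fix e :: real assume e: "e > 0"
  then have e': "e/(L+1) > 0" using h(3) by simp
  from tb[unfolded TB_def, rule_format, OF e'] obtain F
    where F: "finite F" "F \<subseteq> Linf" "\<forall>k\<in>orb SS f. \<exists>a\<in>F. L2_dist k a < e/(L+1)"
    by (elim exE conjE)
  define F' where "F' = (\<lambda>a. (\<lambda>x. h (a x))) ` F"
  have "finite F'" using F(1) by (simp add: F'_def)
  moreover have "F' \<subseteq> Linf"
  proof
    fix c assume "c \<in> F'"
    then obtain a where "a \<in> F" "c = (\<lambda>x. h (a x))" unfolding F'_def by blast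
    then show "c \<in> Linf" using F(2) Linf_lip[OF _ h(1,2), of a] by blast
  qed
  moreover have "\<forall>k\<in>orb SS (\<lambda>x. h (f x)). \<exists>a\<in>F'. L2_dist k a < e"
  proof
    fix k assume "k \<in> orb SS (\<lambda>x. h (f x))"
    then obtain S where S: "S \<in> SS" "k = (\<lambda>x. h (f x)) \<circ> S" unfolding orb_def by blast
    have "f \<circ> S \<in> orb SS f" using S(1) unfolding orb_def by blast
    from bspec[OF F(3) this] obtain a where a: "a \<in> F" "L2_dist (f \<circ> S) a < e/(L+1)" by (elim bexE)
    have mp: "measure_pres S" using SS S(1) by blast
    have k: "k = (\<lambda>x. h ((f \<circ> S) x))" using S(2) by (simp add: o_def)
    have "L2_dist k (\<lambda>x. h (a x)) \<le> L * L2_dist (f \<circ> S) a"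
      unfolding k by (rule L2_lip[OF Linf_mp[OF mp f] _ h]) (use a(1) F(2) in auto)
    also have "\<dots> \<le> L * (e/(L+1))" by (intro mult_left_mono) (use a(2) h(3) in auto)
    also have "\<dots> < e" using e h(3) by (simp add: field_simps)
    finally show "\<exists>a\<in>F'. L2_dist k a < e" using a(1) unfolding F'_def by blast
  qed
  ultimately show "\<exists>F. finite F \<and> F \<subseteq> Linf \<and> (\<forall>k\<in>orb SS (\<lambda>x. h (f x)). \<exists>a\<in>F. L2_dist k a < e)"
    by blast
qed

lemma orb_add:
  assumes SS: "\<forall>S\<in>SS. measure_pres S" and f: "f \<in> Linf" and g: "g \<in> Linf"
    and tf: "TB (orb SS f)" and tg: "TB (orb SS g)"
  shows "TB (orb SS (\<lambda>x. f x + g x))"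
  unfolding TB_def
proof (intro allI impI)
  fix e :: real assume e: "e > 0"
  then have e': "e/2 > 0" by simp
  from tf[unfolded TB_def, rule_format, OF e'] obtain F
    where F: "finite F" "F \<subseteq> Linf" "\<forall>k\<in>orb SS f. \<exists>a\<in>F. L2_dist k a < e/2"
    by (elim exE conjE)
  from tg[unfolded TB_def, rule_format, OF e'] obtain G
    where G: "finite G" "G \<subseteq> Linf" "\<forall>k\<in>orb SS g. \<exists>a\<in>G. L2_dist k a < e/2"
    by (elim exE conjE)
  define H where "H = (\<lambda>(a, b). (\<lambda>x. a x + b x)) ` (F \<times> G)"
  have "finite H" using F(1) G(1) by (simp add: H_def)
  moreover have "H \<subseteq> Linf"
  proof
    fix c assume "c \<in> H"
    then obtain p where p: "p \<in> F \<times> G" "c = (\<lambda>(a, b). (\<lambda>x. a x + b x)) p" unfolding H_def by blast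
    then show "c \<in> Linf" using F(2) G(2) by (cases p) (auto intro: Linf_add)
  qed
  moreover have "\<forall>k\<in>orb SS (\<lambda>x. f x + g x). \<exists>c\<in>H. L2_dist k c < e"
  proof
    fix k assume "k \<in> orb SS (\<lambda>x. f x + g x)"
    then obtain S where S: "S \<in> SS" "k = (\<lambda>x. f x + g x) \<circ> S" unfolding orb_def by blast
    have "f \<circ> S \<in> orb SS f" using S(1) unfolding orb_def by blast
    from bspec[OF F(3) this] obtain a where a: "a \<in> F" "L2_dist (f \<circ> S) a < e/2" by (elim bexE)
    have "g \<circ> S \<in> orb SS g" using S(1) unfolding orb_def by blast
    from bspec[OF G(3) this] obtain b where b: "b \<in> G" "L2_dist (g \<circ> S) b < e/2" by (elim bexE)
    have mp: "measure_pres S" using SS S(1) by blast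
    have k: "k = (\<lambda>x. (f \<circ> S) x + (g \<circ> S) x)" using S(2) by (simp add: o_def)
    have "L2_dist k (\<lambda>x. a x + b x) \<le> L2_dist (f \<circ> S) a + L2_dist (g \<circ> S) b"
      unfolding k by (rule L2_add[OF Linf_mp[OF mp f] Linf_mp[OF mp g]]) (use a(1) b(1) F(2) G(2) in auto)
    also have "\<dots> < e" using a(2) b(2) by simp
    finally have "L2_dist k (\<lambda>x. a x + b x) < e" .
    moreover have "(\<lambda>x. a x + b x) \<in> H" using a(1) b(1) unfolding H_def
      by (rule image_eqI[rotated, OF SigmaI]) simp
    ultimately show "\<exists>c\<in>H. L2_dist k c < e" by blast
  qed
  ultimately show "\<exists>F. finite F \<and> F \<subseteq> Linf \<and> (\<forall>k\<in>orb SS (\<lambda>x. f x + g x). \<exists>a\<in>F. L2_dist k a < e)"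
    by blast
qed

lemma orb_const: "TB (orb SS (\<lambda>x. c))"
  unfolding TB_def
proof (intro allI impI)
  fix e :: real assume e: "e > 0"
  have "\<forall>k\<in>orb SS (\<lambda>x. c). \<exists>a\<in>{\<lambda>x. c}. L2_dist k a < e"
    using e by (auto simp: orb_def o_def L2_dist_self)
  then show "\<exists>F. finite F \<and> F \<subseteq> Linf \<and> (\<forall>k\<in>orb SS (\<lambda>x. c). \<exists>a\<in>F. L2_dist k a < e)"
    using Linf_const[of c] by blast
qed

lemma orb_AE:
  assumes SS: "\<forall>S\<in>SS. measure_pres S" and f: "f \<in> Linf" and g: "g \<in> Linf"
    and ae: "AE x in \<mu>\<^sub>T. f x = g x" and tg: "TB (orb SS g)"
  shows "TB (orb SS f)"
  by (rule orb_approx[OF SS f]) (use g tg L2_AE[OF f g ae] in auto)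


lemma clamp_lip: "\<bar>min 1 (max 0 u) - min 1 (max 0 v)\<bar> \<le> \<bar>u - v\<bar>" for u v :: real
  by (auto simp: min_def max_def abs_if)

lemma indicator_Linf: assumes "D \<in> sets \<mu>\<^sub>T" shows "(indicator D :: real^'d::finite \<Rightarrow> real) \<in> Linf"
  by (rule LinfI[where C=1]) (use assms in \<open>auto simp: indicator_def\<close>)

lemma level_set_sets: assumes "\<rho> \<in> Linf" shows "{x \<in> torus_cube. \<alpha> \<le> \<rho> x} \<in> sets \<mu>\<^sub>T"
proof -
  have m: "\<rho> \<in> borel_measurable \<mu>\<^sub>T" using LinfD(1)[OF assms] .
  have "{x \<in> space \<mu>\<^sub>T. \<alpha> \<le> \<rho> x} \<in> sets \<mu>\<^sub>T" using m by measurable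
  then show ?thesis by simp
qed

lemma level_TB:
  fixes \<rho> :: "real^'d::finite \<Rightarrow> real"
  assumes SS: "\<forall>S\<in>SS. measure_pres S" and r: "\<rho> \<in> Linf" and tb: "TB (orb SS \<rho>)"
  shows "TB (orb SS (indicator {x \<in> torus_cube. \<alpha> \<le> \<rho> x}))"
proof -
  define D where "D = {x \<in> torus_cube. \<alpha> \<le> \<rho> x}"
  define hh where "hh n y = min 1 (max 0 (real n * (y - \<alpha>) + 1))" for n :: nat and y :: real
  have cont: "continuous_on UNIV (hh n)" for n unfolding hh_def by (intro continuous_intros)
  have lip: "\<bar>hh n a - hh n b\<bar> \<le> real n * \<bar>a - b\<bar>" for n a b
  proof -
    have "\<bar>hh n a - hh n b\<bar> \<le> \<bar>(real n * (a - \<alpha>) + 1) - (real n * (b - \<alpha>) + 1)\<bar>"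
      unfolding hh_def by (rule clamp_lip)
    also have "(real n * (a - \<alpha>) + 1) - (real n * (b - \<alpha>) + 1) = real n * (a - b)"
      by (simp add: algebra_simps)
    also have "\<bar>real n * (a - b)\<bar> = real n * \<bar>a - b\<bar>" by (simp add: abs_mult)
    finally show ?thesis .
  qed
  have iD: "indicator D \<in> Linf" unfolding D_def by (rule indicator_Linf[OF level_set_sets[OF r]])
  have gL: "(\<lambda>x. hh n (\<rho> x)) \<in> Linf" for n by (rule Linf_lip[OF r cont lip])
  have gTB: "TB (orb SS (\<lambda>x. hh n (\<rho> x)))" for n by (rule orb_lip[OF SS r tb cont lip]) simp
  define s where "s n x = (indicator D x - hh n (\<rho> x))\<^sup>2" for n x
  have lim: "(\<lambda>n. \<integral>x. s n x \<partial>\<mu>\<^sub>T) \<longlonglongrightarrow> (\<integral>x. 0 \<partial>(\<mu>\<^sub>T :: (real^'d) measure))"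
  proof (rule integral_dominated_convergence[where w="\<lambda>x. 1"])
    show "(\<lambda>x. 0::real) \<in> borel_measurable \<mu>\<^sub>T" by simp
    show "s n \<in> borel_measurable \<mu>\<^sub>T" for n
      unfolding s_def using LinfD(1)[OF Linf_sq[OF Linf_diff[OF iD gL]]] .
    show "integrable \<mu>\<^sub>T (\<lambda>x. 1::real)" using Linf_integrable[OF Linf_const] .
    show "AE x in \<mu>\<^sub>T. norm (s n x) \<le> 1" for n
    proof (rule AE_I2)
      fix x :: "real^'d"
      have "0 \<le> hh n (\<rho> x)" "hh n (\<rho> x) \<le> 1" unfolding hh_def by auto
      moreover have "indicator D x = (0::real) \<or> indicator D x = (1::real)" by (simp add: indicator_def)
      ultimately have "\<bar>indicator D x - hh n (\<rho> x)\<bar> \<le> 1" by auto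
      then have "(indicator D x - hh n (\<rho> x))\<^sup>2 \<le> 1\<^sup>2" by (metis abs_le_square_iff abs_one)
      then show "norm (s n x) \<le> 1" by (simp add: s_def)
    qed
    show "AE x in \<mu>\<^sub>T. (\<lambda>n. s n x) \<longlonglongrightarrow> 0"
    proof (rule AE_I2)
      fix x :: "real^'d" assume x: "x \<in> space \<mu>\<^sub>T"
      show "(\<lambda>n. s n x) \<longlonglongrightarrow> 0"
      proof (cases "\<alpha> \<le> \<rho> x")
        case True
        then have "s n x = 0" for n
          using x by (simp add: s_def hh_def D_def indicator_def)
        then show ?thesis by simp
      next
        case False
        obtain N :: nat where N: "1 / (\<alpha> - \<rho> x) < real N" using reals_Archimedean2 by blast
        have "s n x = 0" if "n \<ge> N" for n
        proof -
          have "1 / (\<alpha> - \<rho> x) < real n" using N that by (meson less_le_trans of_nat_le_iff)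
          then have "1 < real n * (\<alpha> - \<rho> x)" using False by (simp add: field_simps)
          then have "real n * (\<rho> x - \<alpha>) + 1 \<le> 0" by (simp add: algebra_simps)
          then have "hh n (\<rho> x) = 0" unfolding hh_def by simp
          then show ?thesis using False by (simp add: s_def D_def indicator_def)
        qed
        then have "\<forall>\<^sub>F n in sequentially. s n x = 0" using eventually_sequentially by blast
        then show ?thesis by (rule tendsto_eventually)
      qed
    qed
  qed
  then have "(\<lambda>n. sqrt (\<integral>x. s n x \<partial>\<mu>\<^sub>T)) \<longlonglongrightarrow> sqrt 0"
    by (intro tendsto_real_sqrt) simp
  then have lim2: "(\<lambda>n. L2_dist (indicator D) (\<lambda>x. hh n (\<rho> x))) \<longlonglongrightarrow> 0"
    by (simp add: L2_dist_def s_def)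
  show ?thesis
    unfolding D_def[symmetric]
  proof (rule orb_approx[OF SS iD])
    fix e :: real assume "e > 0"
    from order_tendstoD(2)[OF lim2 this] obtain N where
      "\<forall>n\<ge>N. L2_dist (indicator D) (\<lambda>x. hh n (\<rho> x)) < e"
      unfolding eventually_sequentially by blast
    then have "L2_dist (indicator D) (\<lambda>x. hh N (\<rho> x)) < e" by simp
    then show "\<exists>g\<in>Linf. TB (orb SS g) \<and> L2_dist (indicator D) g < e" using gL gTB by blast
  qed
qed


lemma count_min:
  fixes z :: real assumes z: "0 \<le> z"
  shows "(\<Sum>k<K. (if real k + 1 \<le> z then 1 else 0::real)) = real (min K (nat \<lfloor>z\<rfloor>))"
proof (induction K)
  case 0 then show ?case by simp
next
  case (Suc K)
  have "(\<Sum>k<Suc K. (if real k + 1 \<le> z then 1 else 0::real))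
        = real (min K (nat \<lfloor>z\<rfloor>)) + (if real K + 1 \<le> z then 1 else 0)"
    using Suc.IH by simp
  also have "\<dots> = real (min (Suc K) (nat \<lfloor>z\<rfloor>))"
  proof (cases "real K + 1 \<le> z")
    case True
    then have "real (Suc K) \<le> z" by simp
    then have "Suc K \<le> nat \<lfloor>z\<rfloor>" by (rule le_nat_floor)
    then show ?thesis using True by simp
  next
    case False
    have "\<lfloor>z\<rfloor> < int K + 1" by (rule floor_less_iff[THEN iffD2]) (use False in simp)
    then have "nat \<lfloor>z\<rfloor> \<le> K" by linarith
    then show ?thesis using False by simp
  qed
  finally show ?case .
qed

lemma sum_TB:
  fixes K :: nat and D :: "nat \<Rightarrow> (real^'a::finite) set"
  assumes SS: "\<forall>S\<in>SS. measure_pres S" and D: "\<And>k. D k \<in> sets \<mu>\<^sub>T"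
    and tD: "\<And>k. TB (orb SS (indicator (D k)))"
  shows "(\<lambda>x. c + (\<Sum>k<K. \<delta> * indicator (D k) x)) \<in> Linf \<and> TB (orb SS (\<lambda>x. c + (\<Sum>k<K. \<delta> * indicator (D k) x)))"
proof (induction K)
  case 0
  show ?case using Linf_const[of c] orb_const[of SS c] by simp
next
  case (Suc K)
  have eq: "(\<lambda>x. c + (\<Sum>k<Suc K. \<delta> * indicator (D k) x))
      = (\<lambda>x. (c + (\<Sum>k<K. \<delta> * indicator (D k) x)) + (\<lambda>y. \<delta> * y) (indicator (D K) x))"
    by (simp add: add.assoc)
  have iK: "(indicator (D K) :: real^'a::finite \<Rightarrow> real) \<in> Linf" by (rule indicator_Linf[OF D])
  have cont: "continuous_on UNIV (\<lambda>y::real. \<delta> * y)" by (intro continuous_intros)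
  have lip: "\<bar>\<delta> * a - \<delta> * b\<bar> \<le> \<bar>\<delta>\<bar> * \<bar>a - b\<bar>" for a b :: real
    by (simp add: abs_mult flip: right_diff_distrib)
  have L2: "(\<lambda>x. (\<lambda>y. \<delta> * y) (indicator (D K) x)) \<in> Linf"
    by (rule Linf_lip[OF iK cont lip])
  have T2: "TB (orb SS (\<lambda>x. (\<lambda>y. \<delta> * y) (indicator (D K) x)))"
    by (rule orb_lip[OF SS iK tD cont lip]) simp
  show ?case unfolding eq
    using Linf_add[OF Suc.IH[THEN conjunct1] L2] orb_add[OF SS Suc.IH[THEN conjunct1] L2 Suc.IH[THEN conjunct2] T2]
    by blast
qed


lemma from_levels:
  fixes \<rho> :: "real^'d::finite \<Rightarrow> real"
  assumes SS: "\<forall>S\<in>SS. measure_pres S" and r: "\<rho> \<in> Linf"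
    and lv: "\<And>\<alpha>. TB (orb SS (indicator {x \<in> torus_cube. \<alpha> \<le> \<rho> x}))"
  shows "TB (orb SS \<rho>)"
proof -
  obtain C0 where C0: "AE x in \<mu>\<^sub>T. \<bar>\<rho> x\<bar> \<le> C0" using LinfD(2)[OF r] by blast
  define C where "C = \<bar>C0\<bar>"
  have C: "AE x in \<mu>\<^sub>T. \<bar>\<rho> x\<bar> \<le> C" using C0 by eventually_elim (auto simp: C_def)
  have C0': "C \<ge> 0" by (simp add: C_def)
  define m where "m = measure (\<mu>\<^sub>T :: (real^'d) measure) torus_cube"
  have m0: "m \<ge> 0" by (simp add: m_def)
  show ?thesis
  proof (rule orb_approx[OF SS r])
    fix e :: real assume e: "e > 0"
    define \<delta> where "\<delta> = e / (sqrt m + 1)"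
    have sp: "sqrt m + 1 > 0" using m0 by (smt (verit) real_sqrt_ge_zero)
    then have dp: "\<delta> > 0" using e by (simp add: \<delta>_def)
    define K where "K = nat \<lceil>2 * C / \<delta>\<rceil>"
    define D where "D k = {x \<in> torus_cube. - C + (real k + 1) * \<delta> \<le> \<rho> x}" for k :: nat
    have Ds: "D k \<in> sets \<mu>\<^sub>T" for k unfolding D_def by (rule level_set_sets[OF r])
    have tD: "TB (orb SS (indicator (D k)))" for k unfolding D_def by (rule lv)
    define g where "g = (\<lambda>x. - C + (\<Sum>k<K. \<delta> * indicator (D k) x))"
    have gg: "g \<in> Linf \<and> TB (orb SS g)" unfolding g_def by (rule sum_TB[OF SS Ds tD])
    have pw: "(\<rho> x - g x)\<^sup>2 \<le> \<delta>\<^sup>2" if x: "x \<in> torus_cube" and b: "\<bar>\<rho> x\<bar> \<le> C" for x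
    proof -
      define z where "z = (\<rho> x + C) / \<delta>"
      have z0: "0 \<le> z" using b dp by (simp add: z_def)
      have ind: "indicator (D k) x = (if real k + 1 \<le> z then 1 else (0::real))" for k
      proof -
        have "(- C + (real k + 1) * \<delta> \<le> \<rho> x) \<longleftrightarrow> (real k + 1 \<le> z)"
          using dp by (simp add: z_def pos_le_divide_eq algebra_simps)
        then show ?thesis using x by (simp add: D_def indicator_def)
      qed
      have "(\<Sum>k<K. \<delta> * indicator (D k) x) = \<delta> * (\<Sum>k<K. (if real k + 1 \<le> z then 1 else (0::real)))"
        by (simp add: ind sum_distrib_left)
      also have "\<dots> = \<delta> * real (min K (nat \<lfloor>z\<rfloor>))" by (simp add: count_min[OF z0])
      also have "min K (nat \<lfloor>z\<rfloor>) = nat \<lfloor>z\<rfloor>"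
      proof -
        have "z \<le> 2 * C / \<delta>" using b dp by (simp add: z_def divide_right_mono)
        then have "\<lfloor>z\<rfloor> \<le> \<lceil>2 * C / \<delta>\<rceil>"
          by (meson floor_le_ceiling floor_mono order_trans)
        then have "nat \<lfloor>z\<rfloor> \<le> K" unfolding K_def by (rule nat_mono)
        then show ?thesis by simp
      qed
      also have "real (nat \<lfloor>z\<rfloor>) = real_of_int \<lfloor>z\<rfloor>" using z0 by simp
      finally have gx: "g x = - C + \<delta> * real_of_int \<lfloor>z\<rfloor>" by (simp add: g_def)
      have "\<rho> x - g x = \<delta> * (z - real_of_int \<lfloor>z\<rfloor>)"
        using dp by (simp add: gx z_def field_simps)
      moreover have "0 \<le> z - real_of_int \<lfloor>z\<rfloor>" "z - real_of_int \<lfloor>z\<rfloor> < 1"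
        by (simp_all add: of_int_floor_le) linarith
      ultimately have "0 \<le> \<rho> x - g x" "\<rho> x - g x \<le> \<delta>"
        using dp by (auto simp: mult_le_cancel_left1)
      then show ?thesis by (simp add: power_mono)
    qed
    have gL: "g \<in> Linf" using gg by blast
    have "(\<integral>x. (\<rho> x - g x)\<^sup>2 \<partial>\<mu>\<^sub>T) \<le> (\<integral>x. \<delta>\<^sup>2 \<partial>(\<mu>\<^sub>T :: (real^'d) measure))"
    proof (rule integral_mono_AE)
      show "integrable \<mu>\<^sub>T (\<lambda>x. (\<rho> x - g x)\<^sup>2)" by (rule Linf_integrable[OF Linf_sq[OF Linf_diff[OF r gL]]])
      show "integrable (\<mu>\<^sub>T :: (real^'d) measure) (\<lambda>x. \<delta>\<^sup>2)" by (rule Linf_integrable[OF Linf_const])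
      show "AE x in \<mu>\<^sub>T. (\<rho> x - g x)\<^sup>2 \<le> \<delta>\<^sup>2"
        using C AE_space[of "\<mu>\<^sub>T :: (real^'d) measure"]
      proof eventually_elim
        case (elim x)
        then show ?case using pw by simp
      qed
    qed
    also have "\<dots> = m * \<delta>\<^sup>2" by (simp add: m_def)
    finally have "L2_dist \<rho> g \<le> sqrt (m * \<delta>\<^sup>2)" unfolding L2_dist_def by (rule real_sqrt_le_mono)
    also have "\<dots> = sqrt m * \<delta>" using dp by (simp add: real_sqrt_mult)
    also have "\<dots> < e"
    proof -
      have "sqrt m * \<delta> = e * (sqrt m / (sqrt m + 1))" by (simp add: \<delta>_def)
      also have "\<dots> < e * 1"
      proof (rule mult_strict_left_mono[OF _ e])
        show "sqrt m / (sqrt m + 1) < 1" using sp by (simp add: divide_less_eq)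
      qed
      finally show ?thesis by simp
    qed
    finally show "\<exists>g\<in>Linf. TB (orb SS g) \<and> L2_dist \<rho> g < e" using gg by blast
  qed
qed

theorem theorem4p3:
  fixes u \<Phi> :: "real \<Rightarrow> real^'d \<Rightarrow> real^'d" and p :: real
  assumes "CARD('d) \<ge> 2"
    and "1 < p"
    and "Linf_W1p p u"
    and "div_free u"
    and "DiPerna_Lions_flow u \<Phi>"
    and "\<rho> \<in> Linf"
  shows "\<rho> \<notin> \<F> \<Phi> \<longleftrightarrow> N_measurable \<Phi> \<rho>"
proof -
  note flow = assms(5) and r = assms(6)
  define SS where "SS = flow_inv \<Phi> ` {0..}"
  have SS: "\<forall>S\<in>SS. measure_pres S"
  proof
    fix S assume "S \<in> SS"
    then obtain t where t: "t \<ge> 0" "S = flow_inv \<Phi> t" by (auto simp: SS_def)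
    from flow t have "\<exists>S. is_flow_inverse (\<Phi> t) S" by (auto simp: DiPerna_Lions_flow_def)
    then have "is_flow_inverse (\<Phi> t) (flow_inv \<Phi> t)" unfolding flow_inv_def by (rule someI_ex)
    then show "measure_pres S" by (simp add: is_flow_inverse_def t(2))
  qed
  have orbeq: "{transported \<Phi> t f |t. t \<ge> 0} = orb SS f" for f
    by (auto simp: transported_def orb_def SS_def)
  have keyF: "f \<notin> \<F> \<Phi> \<longleftrightarrow> TB (orb SS f)" if f: "f \<in> Linf" for f
  proof -
    have "f \<notin> \<F> \<Phi> \<longleftrightarrow> L2_precompact (orb SS f)"
      unfolding mixed_data_def using f orbeq[of f] by auto
    also have "\<dots> \<longleftrightarrow> TB (orb SS f)" by (rule precompact_iff_TB[OF orb_Linf[OF SS f]])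
    finally show ?thesis .
  qed
  show ?thesis
  proof
    assume "\<rho> \<notin> \<F> \<Phi>"
    then have tb: "TB (orb SS \<rho>)" using keyF[OF r] by simp
    show "N_measurable \<Phi> \<rho>" unfolding N_measurable_def
    proof
      fix \<alpha> :: real
      define L where "L = {x \<in> torus_cube. \<alpha> \<le> \<rho> x}"
      have Ls: "L \<in> sets \<mu>\<^sub>T" unfolding L_def by (rule level_set_sets[OF r])
      have "(indicator L :: real^'d \<Rightarrow> real) \<notin> \<F> \<Phi>"
        using keyF[OF indicator_Linf[OF Ls]] level_TB[OF SS r tb, of \<alpha>] by (simp add: L_def)
      then have "L \<in> \<N> \<Phi>" using Ls by (simp add: N_sets_def)
      then show "\<exists>D\<in>\<N> \<Phi>. emeasure \<mu>\<^sub>T ({x \<in> torus_cube. \<rho> x \<ge> \<alpha>} - D) = 0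
                       \<and> emeasure \<mu>\<^sub>T (D - {x \<in> torus_cube. \<rho> x \<ge> \<alpha>}) = 0"
        by (intro bexI[of _ L]) (auto simp: L_def)
    qed
  next
    assume N: "N_measurable \<Phi> \<rho>"
    have "TB (orb SS \<rho>)"
    proof (rule from_levels[OF SS r])
      fix \<alpha> :: real
      define L where "L = {x \<in> torus_cube. \<alpha> \<le> \<rho> x}"
      from N obtain D where D: "D \<in> \<N> \<Phi>" "emeasure \<mu>\<^sub>T (L - D) = 0" "emeasure \<mu>\<^sub>T (D - L) = 0"
        unfolding N_measurable_def L_def by blast
      have Ds: "D \<in> sets \<mu>\<^sub>T" and nD: "(indicator D :: real^'d \<Rightarrow> real) \<notin> \<F> \<Phi>"
        using D(1) by (auto simp: N_sets_def)
      have tD: "TB (orb SS (indicator D :: real^'d \<Rightarrow> real))" using keyF[OF indicator_Linf[OF Ds]] nD by simp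
      have Ls: "L \<in> sets \<mu>\<^sub>T" unfolding L_def by (rule level_set_sets[OF r])
      have "(L - D) \<in> null_sets \<mu>\<^sub>T" using D(2) Ls Ds by (auto intro: null_setsI)
      moreover have "(D - L) \<in> null_sets \<mu>\<^sub>T" using D(3) Ls Ds by (auto intro: null_setsI)
      ultimately have "(L - D) \<union> (D - L) \<in> null_sets \<mu>\<^sub>T" by (rule null_sets.Un)
      then have "AE x in \<mu>\<^sub>T. x \<notin> (L - D) \<union> (D - L)" by (rule AE_not_in)
      then have ae: "AE x in \<mu>\<^sub>T. (indicator L x :: real) = indicator D x"
        by eventually_elim (auto simp: indicator_def)
      show "TB (orb SS (indicator {x \<in> torus_cube. \<alpha> \<le> \<rho> x}))"
        unfolding L_def[symmetric]
        by (rule orb_AE[OF SS indicator_Linf[OF Ls] indicator_Linf[OF Ds] ae tD])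
    qed
    then show "\<rho> \<notin> \<F> \<Phi>" using keyF[OF r] by simp
  qed
qed

end
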